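(* Let $(r_n),(R_n)$ be real sequences with $(r_n)$ bounded, and $(C_n),(D_n),(d_n)$ complex sequences with $\sum_n(|C_n|^2+|d_nD_n|^2)<\infty$. Assume there are $n'\in\mathbb{N}$, $\mu>0$, $\nu>1/2$ such that $|R_n|\le\mu n^{-\nu}(|C_n|^2+|d_nD_n|^2)^{1/2}$ for all $n\ge n'$. Then for every $n_0\ge n'$ and every $T>0$ there is $c(T)>0$ (depending on $T,\mu,\nu,\sup_n|r_n|$) such that $$\int_{-\infty}^{\infty}k^*(t)\Big|\sum_{n=n_0}^\infty R_ne^{r_nt}\Big|^2dt\le c(T)\sum_{n=n_0}^\infty\big(|C_n|^2+|d_nD_n|^2\big).$$
   Context: For $T>0$, $k^*(t):=\cos\big(\frac{\pi t}{2T}\big)$ for $|t|\le T$ and $k^*(t):=0$ for $|t|>T$. *)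

theory Defs
  imports "HOL-Analysis.Analysis"
begin

definition kstar :: "real \<Rightarrow> real \<Rightarrow> real" where
  "kstar T t = (if \<bar>t\<bar> \<le> T then cos (pi * t / (2 * T)) else 0)"

end

theory Submission
  imports Defs
begin

lemma cs_series:
  fixes x y :: "nat \<Rightarrow> real"
  assumes x0: "\<And>n. x n \<ge> 0" and y0: "\<And>n. y n \<ge> 0"
    and sx: "summable (\<lambda>n. (x n)\<^sup>2)" and sy: "summable (\<lambda>n. (y n)\<^sup>2)"
  shows "summable (\<lambda>n. x n * y n) \<and>
         (\<Sum>n. x n * y n) \<le> sqrt (\<Sum>n. (x n)\<^sup>2) * sqrt (\<Sum>n. (y n)\<^sup>2)"
proof
  have le: "norm (x n * y n) \<le> (x n)\<^sup>2 + (y n)\<^sup>2" for n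
  proof -
    have "0 \<le> (x n - y n)\<^sup>2" by simp
    then have "2 * (x n * y n) \<le> (x n)\<^sup>2 + (y n)\<^sup>2" by (simp add: power2_eq_square algebra_simps)
    moreover have "norm (x n * y n) = x n * y n" using x0[of n] y0[of n] by simp
    moreover have "0 \<le> x n * y n" using x0[of n] y0[of n] by simp
    ultimately show ?thesis by linarith
  qed
  show sxy: "summable (\<lambda>n. x n * y n)"
    by (rule summable_comparison_test[OF _ summable_add[OF sx sy]]) (use le in auto)
  show "(\<Sum>n. x n * y n) \<le> sqrt (\<Sum>n. (x n)\<^sup>2) * sqrt (\<Sum>n. (y n)\<^sup>2)"
  proof (rule suminf_le_const[OF sxy])
    fix N
    have "(\<Sum>i<N. x i * y i)\<^sup>2 \<le> (\<Sum>i<N. (x i)\<^sup>2) * (\<Sum>i<N. (y i)\<^sup>2)"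
      by (rule Cauchy_Schwarz_ineq_sum)
    moreover have "(\<Sum>i<N. x i * y i) \<ge> 0" using x0 y0 by (simp add: sum_nonneg)
    ultimately have "(\<Sum>i<N. x i * y i) \<le> sqrt ((\<Sum>i<N. (x i)\<^sup>2) * (\<Sum>i<N. (y i)\<^sup>2))"
      by (simp add: real_le_rsqrt)
    also have "\<dots> = sqrt (\<Sum>i<N. (x i)\<^sup>2) * sqrt (\<Sum>i<N. (y i)\<^sup>2)"
      by (simp add: real_sqrt_mult)
    also have "\<dots> \<le> sqrt (\<Sum>n. (x n)\<^sup>2) * sqrt (\<Sum>n. (y n)\<^sup>2)"
      by (intro mult_mono real_sqrt_le_mono sum_le_suminf sx sy) (auto simp: sum_nonneg intro!: suminf_nonneg sx)
    finally show "(\<Sum>i<N. x i * y i) \<le> sqrt (\<Sum>n. (x n)\<^sup>2) * sqrt (\<Sum>n. (y n)\<^sup>2)" .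
  qed
qed

theorem proposition5p13:
  fixes T \<mu> \<nu> \<rho> :: real
  assumes "T > 0" and "\<mu> > 0" and "\<nu> > 1/2"
  shows "\<exists>c>0. \<forall>(r::nat \<Rightarrow> real) (R::nat \<Rightarrow> real) (C::nat \<Rightarrow> complex)
           (D::nat \<Rightarrow> complex) (d::nat \<Rightarrow> complex) (n'::nat).
      bounded (range r) \<longrightarrow>
      (SUP n. \<bar>r n\<bar>) = \<rho> \<longrightarrow>
      summable (\<lambda>n. (cmod (C n))\<^sup>2 + (cmod (d n * D n))\<^sup>2) \<longrightarrow>
      n' \<ge> 1 \<longrightarrow>
      (\<forall>n\<ge>n'. \<bar>R n\<bar> \<le> \<mu> * real n powr (-\<nu>) *
                   sqrt ((cmod (C n))\<^sup>2 + (cmod (d n * D n))\<^sup>2)) \<longrightarrow>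
      (\<forall>n0\<ge>n'.
         (\<integral>\<^sup>+ t. ennreal (kstar T t *
              (\<Sum>k. R (k + n0) * exp (r (k + n0) * t))\<^sup>2) \<partial>lborel)
         \<le> ennreal (c * (\<Sum>k. (cmod (C (k + n0)))\<^sup>2 + (cmod (d (k + n0) * D (k + n0)))\<^sup>2)))"
proof -
  define Z where "Z = (\<Sum>k. (real (Suc k)) powr (-2*\<nu>))"
  have sZ: "summable (\<lambda>k. (real (Suc k)) powr (-2*\<nu>))"
  proof -
    have "summable (\<lambda>k. (real k) powr (-2*\<nu>))"
      using assms(3) by (subst summable_real_powr_iff) auto
    then show ?thesis using summable_Suc_iff[of "\<lambda>k. (real k) powr (-2*\<nu>)"] by simp
  qed
  have Z0: "Z \<ge> 0" unfolding Z_def by (intro suminf_nonneg sZ) auto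
  define c where "c = 2 * T * exp (2 * \<bar>\<rho>\<bar> * T) * \<mu>\<^sup>2 * Z + 1"
  have c0: "c > 0" unfolding c_def using assms Z0 by (simp add: add_nonneg_pos)
  show ?thesis
  proof (intro exI[of _ c] conjI c0 allI impI)
    fix r R :: "nat \<Rightarrow> real" and C D d :: "nat \<Rightarrow> complex" and n' n0 :: nat
    assume bd: "bounded (range r)" and sup: "(SUP n. \<bar>r n\<bar>) = \<rho>"
      and sa: "summable (\<lambda>n. (cmod (C n))\<^sup>2 + (cmod (d n * D n))\<^sup>2)"
      and n1: "n' \<ge> 1"
      and Rb: "\<forall>n\<ge>n'. \<bar>R n\<bar> \<le> \<mu> * real n powr (-\<nu>) *
                   sqrt ((cmod (C n))\<^sup>2 + (cmod (d n * D n))\<^sup>2)"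
      and n0: "n0 \<ge> n'"
    define a where "a k = sqrt ((cmod (C (k + n0)))\<^sup>2 + (cmod (d (k + n0) * D (k + n0)))\<^sup>2)" for k
    define w where "w k = real (k + n0) powr (-\<nu>)" for k
    define S where "S = (\<Sum>k. (cmod (C (k + n0)))\<^sup>2 + (cmod (d (k + n0) * D (k + n0)))\<^sup>2)"
    have a2: "(a k)\<^sup>2 = (cmod (C (k + n0)))\<^sup>2 + (cmod (d (k + n0) * D (k + n0)))\<^sup>2" for k
      unfolding a_def by simp
    have sa2: "summable (\<lambda>k. (a k)\<^sup>2)"
      unfolding a2 using summable_ignore_initial_segment[OF sa, of n0] by simp
    have S_eq: "S = (\<Sum>k. (a k)\<^sup>2)" unfolding S_def a2 ..
    have S0: "S \<ge> 0" unfolding S_eq by (intro suminf_nonneg sa2) auto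
    have w2: "(w k)\<^sup>2 \<le> (real (Suc k)) powr (-2*\<nu>)" for k
    proof -
      have pos: "real (k + n0) > 0" using n0 n1 by simp
      have "(w k)\<^sup>2 = real (k + n0) powr (-2*\<nu>)"
        unfolding w_def using pos by (simp add: powr_powr[symmetric] power2_eq_square powr_add[symmetric])
      also have "\<dots> \<le> (real (Suc k)) powr (-2*\<nu>)"
        using n0 n1 assms(3) by (intro powr_mono2') auto
      finally show ?thesis .
    qed
    have sw2: "summable (\<lambda>k. (w k)\<^sup>2)"
      by (rule summable_comparison_test[OF _ sZ]) (use w2 in auto)
    have W: "(\<Sum>k. (w k)\<^sup>2) \<le> Z"
      unfolding Z_def by (intro suminf_le sw2 sZ w2)
    have w0: "w k \<ge> 0" for k unfolding w_def by simp
    have a0: "a k \<ge> 0" for k unfolding a_def by simp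
    from cs_series[OF w0 a0 sw2 sa2]
    have swa: "summable (\<lambda>k. w k * a k)"
      and CS: "(\<Sum>k. w k * a k) \<le> sqrt (\<Sum>k. (w k)\<^sup>2) * sqrt (\<Sum>k. (a k)\<^sup>2)" by auto
    have CS': "(\<Sum>k. w k * a k) \<le> sqrt Z * sqrt S"
    proof -
      have "sqrt (\<Sum>k. (w k)\<^sup>2) * sqrt (\<Sum>k. (a k)\<^sup>2) \<le> sqrt Z * sqrt (\<Sum>k. (a k)\<^sup>2)"
        using W S0 S_eq by (intro mult_right_mono real_sqrt_le_mono) auto
      then show ?thesis using CS S_eq by simp
    qed
    have Rk: "\<bar>R (k + n0)\<bar> \<le> \<mu> * (w k * a k)" for k
      using Rb[rule_format, of "k+n0"] n0 unfolding w_def a_def by (simp add: mult.assoc)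
    obtain B where B: "\<And>n. \<bar>r n\<bar> \<le> B"
      using bd unfolding bounded_iff by auto
    have bdd: "bdd_above (range (\<lambda>n. \<bar>r n\<bar>))" using B by (intro bdd_aboveI2) auto
    have rr: "\<bar>r n\<bar> \<le> \<rho>" for n using cSUP_upper[OF _ bdd, of n] sup by simp
    have rho: "\<rho> = \<bar>\<rho>\<bar>" using rr[of 0] by simp
    define M where "M = exp (2 * \<bar>\<rho>\<bar> * T) * \<mu>\<^sup>2 * Z * S"
    have M0: "M \<ge> 0" unfolding M_def using Z0 S0 by simp
    have pt: "(\<Sum>k. R (k + n0) * exp (r (k + n0) * t))\<^sup>2 \<le> M" if t: "\<bar>t\<bar> \<le> T" for t
    proof -
      define E where "E = exp (\<bar>\<rho>\<bar> * T)"
      have e: "exp (r n * t) \<le> E" for n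
      proof -
        have "r n * t \<le> \<bar>r n\<bar> * \<bar>t\<bar>" by (simp add: abs_mult[symmetric])
        also have "\<dots> \<le> \<bar>\<rho>\<bar> * T" using rr[of n] rho t by (intro mult_mono) auto
        finally show ?thesis unfolding E_def by simp
      qed
      have bnd: "norm (R (k + n0) * exp (r (k + n0) * t)) \<le> E * \<mu> * (w k * a k)" for k
      proof -
        have "norm (R (k + n0) * exp (r (k + n0) * t)) = \<bar>R (k + n0)\<bar> * exp (r (k + n0) * t)"
          by (simp add: abs_mult)
        also have "\<dots> \<le> (\<mu> * (w k * a k)) * E"
          using Rk[of k] e[of "k+n0"] by (intro mult_mono) auto
        finally show ?thesis by (simp add: mult_ac)
      qed
      have sg: "summable (\<lambda>k. E * \<mu> * (w k * a k))" using swa by (rule summable_mult)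
      have sf: "summable (\<lambda>k. R (k + n0) * exp (r (k + n0) * t))"
        by (rule summable_comparison_test[OF _ sg]) (use bnd in auto)
      have "\<bar>\<Sum>k. R (k + n0) * exp (r (k + n0) * t)\<bar> \<le> (\<Sum>k. E * \<mu> * (w k * a k))"
      proof -
        have "\<bar>\<Sum>k. R (k + n0) * exp (r (k + n0) * t)\<bar> \<le> (\<Sum>k. \<bar>R (k + n0) * exp (r (k + n0) * t)\<bar>)"
          using summable_rabs_comparison_test[of "\<lambda>k. R (k + n0) * exp (r (k + n0) * t)", OF _ sg] bnd
          by (intro summable_rabs) auto
        also have "\<dots> \<le> (\<Sum>k. E * \<mu> * (w k * a k))"
          using bnd sg summable_rabs_comparison_test[of "\<lambda>k. R (k + n0) * exp (r (k + n0) * t)", OF _ sg]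
          by (intro suminf_le) auto
        finally show ?thesis .
      qed
      also have "\<dots> = E * \<mu> * (\<Sum>k. w k * a k)" using swa by (rule suminf_mult)
      also have "\<dots> \<le> E * \<mu> * (sqrt Z * sqrt S)"
        using CS' assms(2) by (intro mult_left_mono) (auto simp: E_def)
      finally have ab: "\<bar>\<Sum>k. R (k + n0) * exp (r (k + n0) * t)\<bar> \<le> E * \<mu> * (sqrt Z * sqrt S)" .
      have "(\<Sum>k. R (k + n0) * exp (r (k + n0) * t))\<^sup>2 \<le> (E * \<mu> * (sqrt Z * sqrt S))\<^sup>2"
        using ab by (metis abs_ge_zero abs_le_square_iff order_trans power2_abs abs_of_nonneg)
      also have "\<dots> = M" unfolding M_def E_def using Z0 S0
        by (simp add: power_mult_distrib exp_double[symmetric] mult_ac power2_eq_square[symmetric])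
      finally show ?thesis .
    qed
    have "(\<integral>\<^sup>+ t. ennreal (kstar T t * (\<Sum>k. R (k + n0) * exp (r (k + n0) * t))\<^sup>2) \<partial>lborel)
          \<le> (\<integral>\<^sup>+ t. ennreal M * indicator {-T..T} t \<partial>lborel)"
    proof (rule nn_integral_mono)
      fix t
      show "ennreal (kstar T t * (\<Sum>k. R (k + n0) * exp (r (k + n0) * t))\<^sup>2) \<le> ennreal M * indicator {-T..T} t"
      proof (cases "\<bar>t\<bar> \<le> T")
        case True
        have k1: "kstar T t \<le> 1" "kstar T t \<ge> 0"
        proof -
          have "\<bar>pi * t / (2 * T)\<bar> \<le> pi / 2" using True assms(1)
            by (simp add: abs_mult abs_divide divide_simps pi_gt_zero mult_left_mono)
          then have "-(pi/2) \<le> pi * t / (2 * T) \<and> pi * t / (2 * T) \<le> pi/2"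
            unfolding abs_le_iff by linarith
          then have "0 \<le> cos (pi * t / (2 * T))" by (intro cos_ge_zero) auto
          then show "kstar T t \<ge> 0" unfolding kstar_def using True by simp
          show "kstar T t \<le> 1" unfolding kstar_def by simp
        qed
        have "kstar T t * (\<Sum>k. R (k + n0) * exp (r (k + n0) * t))\<^sup>2 \<le> 1 * M"
          using k1 pt[OF True] by (intro mult_mono) auto
        then show ?thesis using True by (auto intro: ennreal_leI simp: indicator_def abs_le_iff)
      next
        case False
        then show ?thesis unfolding kstar_def by simp
      qed
    qed
    also have "\<dots> = ennreal M * ennreal (2 * T)"
      using assms(1) by (subst nn_integral_cmult_indicator) auto
    also have "\<dots> = ennreal (M * (2 * T))" using M0 assms(1) by (simp add: ennreal_mult)
    also have "\<dots> \<le> ennreal (c * S)"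
    proof (rule ennreal_leI)
      have "M * (2 * T) = (c - 1) * S" unfolding M_def c_def by (simp add: mult_ac)
      also have "\<dots> \<le> c * S" using S0 by (simp add: algebra_simps)
      finally show "M * (2 * T) \<le> c * S" .
    qed
    finally show "(\<integral>\<^sup>+ t. ennreal (kstar T t * (\<Sum>k. R (k + n0) * exp (r (k + n0) * t))\<^sup>2) \<partial>lborel)
         \<le> ennreal (c * (\<Sum>k. (cmod (C (k + n0)))\<^sup>2 + (cmod (d (k + n0) * D (k + n0)))\<^sup>2))"
      unfolding S_def .
  qed
qed

end
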